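(* For every classical Poincaré-invariant system with timelike future-directed four-momentum, the Newton–Wigner position observable $$\chi^{\mathrm{NW}}_\mu(u,\tau)=-\frac{J_{\mu\rho}\big(u^\rho+\frac{P^\rho}{mc}\big)}{mc-u\cdot P}+\frac{\tau P_\mu}{(-u\cdot P)}-\frac{J_{\lambda\rho}u^\lambda P^\rho}{mc(mc-u\cdot P)}\frac{P_\mu}{(-u\cdot P)}$$ is a centre of spin position observable.
   Context: Minkowski spacetime: affine space $M$ over a 4-dimensional real vector space $V$ with metric $\eta$ of signature $(-,+,+,+)$, fixed orientation and time orientation, fixed origin identifying $M$ with $V$. $u\cdot v:=\eta(u,v)$, indices lowered/raised with $\eta$; $\varepsilon$ is the volume form with $\varepsilon_{0123}=+1$ in positively oriented orthonormal bases; $c>0$. $\mathsf{SpHP}$ is the set of spacelike hyperplanes, each identified with $(u,\tau)$, $u$ future-directed unit timelike normal, $\Sigma=\{x:u\cdot x=-\tau\}$. A classical Poincaré-invariant system has phase-space functions $P_\mu$ (four-momentum) and $J_{\mu\nu}=-J_{\nu\mu}$ (angular momentum about the origin); $m=\sqrt{-P\cdot P}/c$. A position observable is a map $\chi\colon\mathsf{SpHP}\times\Gamma\to M$ with $u_\mu\chi^\mu(u,\tau)=-\tau$ and $\partial\chi_\mu(u,\tau)/\partial\tau=P_\mu/(-u\cdot P)$; its spin tensor is $S(u)_{\mu\nu}=J_{\mu\nu}-\chi_\mu(u,\tau)P_\nu+\chi_\nu(u,\tau)P_\mu$. Pauli–Lubański vector $W_\mu=-\tfrac12\varepsilon_{\mu\nu\rho\sigma}P^\nu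 J^{\rho\sigma}$; spin vector in frame $u$: $s(u)=B(u)W/(mc)$ with $B^\mu{}_\nu(u)=\delta^\mu_\nu+\frac{(P^\mu/(mc)+u^\mu)(P_\nu/(mc)+u_\nu)}{1-u\cdot P/(mc)}-2\frac{u^\mu P_\nu}{mc}$. A position observable is a centre of spin if $s_\mu(u)=-\tfrac12\varepsilon_{\mu\nu\rho\sigma}u^\nu S^{\rho\sigma}(u)$ for all $(u,\tau)$ and all phase-space points. *)

theory Defs
  imports "HOL-Analysis.Analysis"
begin

text \<open>Minkowski space identified (via a positively oriented, time-oriented orthonormal
basis e_0,...,e_3, e_0 future-directed timelike) with real^4.  A vector x :: real^4 is stored
by its contravariant components x^mu; a rank-2 tensor T :: real^4^4 stored as T $ mu $ nu.\<close>

definition eta :: "4 \<Rightarrow> real" where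
  "eta i = (if i = 0 then -1 else 1)"

definition mdot :: "real^4 \<Rightarrow> real^4 \<Rightarrow> real" where
  "mdot x y = (\<Sum>i\<in>UNIV. eta i * x $ i * y $ i)"

text \<open>index lowering / raising (eta is its own inverse)\<close>
definition lower :: "real^4 \<Rightarrow> real^4" where
  "lower x = (\<chi> i. eta i * x $ i)"

definition raise :: "real^4 \<Rightarrow> real^4" where
  "raise x = (\<chi> i. eta i * x $ i)"

definition raise2 :: "real^4^4 \<Rightarrow> real^4^4" where
  "raise2 T = (\<chi> i j. eta i * eta j * T $ i $ j)"

text \<open>volume form, epsilon_{0123} = +1 (lower indices)\<close>
definition eps :: "4 \<Rightarrow> 4 \<Rightarrow> 4 \<Rightarrow> 4 \<Rightarrow> real" where
  "eps a b c d = det (vector [axis a 1, axis b 1, axis c 1, axis d 1] :: real^4^4)"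

definition future_unit :: "real^4 \<Rightarrow> bool" where
  "future_unit u \<longleftrightarrow> mdot u u = -1 \<and> u $ 0 > 0"

definition future_timelike :: "real^4 \<Rightarrow> bool" where
  "future_timelike p \<longleftrightarrow> mdot p p < 0 \<and> p $ 0 > 0"

definition antisym_tensor :: "real^4^4 \<Rightarrow> bool" where
  "antisym_tensor T \<longleftrightarrow> (\<forall>i j. T $ i $ j = - T $ j $ i)"

definition mass :: "real \<Rightarrow> real^4 \<Rightarrow> real" where
  "mass c p = sqrt (- mdot p p) / c"

text \<open>Position observable: chi u tau g is the (contravariant) point of M for the
hyperplane (u,tau) at phase-space point g.  P g contravariant four-momentum.\<close>
definition position_observable ::
  "('g \<Rightarrow> real^4) \<Rightarrow> (real^4 \<Rightarrow> real \<Rightarrow> 'g \<Rightarrow> real^4) \<Rightarrow> bool" where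
  "position_observable P chi \<longleftrightarrow>
     (\<forall>u \<tau> g. future_unit u \<longrightarrow>
        mdot u (chi u \<tau> g) = - \<tau> \<and>
        ((\<lambda>t. lower (chi u t g)) has_vector_derivative
            ((1 / (- mdot u (P g))) *\<^sub>R lower (P g))) (at \<tau>))"

text \<open>Spin tensor S(u)_{mu nu} (lower indices); J g has lower indices J_{mu nu}.\<close>
definition spin_tensor ::
  "('g \<Rightarrow> real^4) \<Rightarrow> ('g \<Rightarrow> real^4^4) \<Rightarrow> (real^4 \<Rightarrow> real \<Rightarrow> 'g \<Rightarrow> real^4)
     \<Rightarrow> real^4 \<Rightarrow> real \<Rightarrow> 'g \<Rightarrow> real^4^4" where
  "spin_tensor P J chi u \<tau> g =
     (\<chi> \<mu> \<nu>. J g $ \<mu> $ \<nu> - lower (chi u \<tau> g) $ \<mu> * lower (P g) $ \<nu>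
                 + lower (chi u \<tau> g) $ \<nu> * lower (P g) $ \<mu>)"

definition PL_low :: "real^4 \<Rightarrow> real^4^4 \<Rightarrow> real^4" where
  "PL_low p Jl = (\<chi> \<mu>. - (1/2) * (\<Sum>\<nu>\<in>UNIV. \<Sum>\<rho>\<in>UNIV. \<Sum>\<sigma>\<in>UNIV.
        eps \<mu> \<nu> \<rho> \<sigma> * p $ \<nu> * raise2 Jl $ \<rho> $ \<sigma>))"

definition Bmat :: "real \<Rightarrow> real^4 \<Rightarrow> real^4 \<Rightarrow> real^4^4" where
  "Bmat c p u = (let mc = mass c p * c in
     (\<chi> \<mu> \<nu>. (if \<mu> = \<nu> then 1 else 0)
        + (p $ \<mu> / mc + u $ \<mu>) * (lower p $ \<nu> / mc + lower u $ \<nu>) / (1 - mdot u p / mc)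
        - 2 * u $ \<mu> * lower p $ \<nu> / mc))"

definition spin_vec :: "real \<Rightarrow> real^4 \<Rightarrow> real^4^4 \<Rightarrow> real^4 \<Rightarrow> real^4" where
  "spin_vec c p Jl u = (\<chi> \<mu>. (\<Sum>\<nu>\<in>UNIV. Bmat c p u $ \<mu> $ \<nu> * raise (PL_low p Jl) $ \<nu>)
                              / (mass c p * c))"

definition centre_of_spin ::
  "real \<Rightarrow> ('g \<Rightarrow> real^4) \<Rightarrow> ('g \<Rightarrow> real^4^4) \<Rightarrow> (real^4 \<Rightarrow> real \<Rightarrow> 'g \<Rightarrow> real^4) \<Rightarrow> bool" where
  "centre_of_spin c P J chi \<longleftrightarrow> position_observable P chi \<and>
     (\<forall>u \<tau> g. future_unit u \<longrightarrow>
        (\<forall>\<mu>. lower (spin_vec c (P g) (J g) u) $ \<mu> =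
              - (1/2) * (\<Sum>\<nu>\<in>UNIV. \<Sum>\<rho>\<in>UNIV. \<Sum>\<sigma>\<in>UNIV.
                  eps \<mu> \<nu> \<rho> \<sigma> * u $ \<nu> * raise2 (spin_tensor P J chi u \<tau> g) $ \<rho> $ \<sigma>)))"

definition chiNW_low :: "real \<Rightarrow> ('g \<Rightarrow> real^4) \<Rightarrow> ('g \<Rightarrow> real^4^4) \<Rightarrow> real^4 \<Rightarrow> real \<Rightarrow> 'g \<Rightarrow> real^4" where
  "chiNW_low c P J u \<tau> g = (let p = P g; Jl = J g; mc = mass c p * c; uP = mdot u p in
     (\<chi> \<mu>. - (\<Sum>\<rho>\<in>UNIV. Jl $ \<mu> $ \<rho> * (u $ \<rho> + p $ \<rho> / mc)) / (mc - uP)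
           + \<tau> * lower p $ \<mu> / (- uP)
           - (\<Sum>la\<in>UNIV. \<Sum>\<rho>\<in>UNIV. Jl $ la $ \<rho> * u $ la * p $ \<rho>) / (mc * (mc - uP))
               * lower p $ \<mu> / (- uP)))"

definition chiNW :: "real \<Rightarrow> ('g \<Rightarrow> real^4) \<Rightarrow> ('g \<Rightarrow> real^4^4) \<Rightarrow> real^4 \<Rightarrow> real \<Rightarrow> 'g \<Rightarrow> real^4" where
  "chiNW c P J u \<tau> g = raise (chiNW_low c P J u \<tau> g)"


end

theory Submission
  imports Defs
begin


lemma four_eq0: "(4::4) = 0" by simp
lemma vector_4:
 "(vector [w,x,y,z] ::('a::zero)^4)$1 = w"
 "(vector [w,x,y,z] ::('a::zero)^4)$2 = x"
 "(vector [w,x,y,z] ::('a::zero)^4)$3 = y"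
 "(vector [w,x,y,z] ::('a::zero)^4)$0 = z"
  unfolding vector_def by simp_all

lemma sum4: "sum f (UNIV::4 set) = f 0 + f 1 + f 2 + f 3"
  using sum_4[of f] unfolding four_eq0 by (simp add: ac_simps)

lemma distinct4: "(0::4) \<noteq> 1" "(0::4) \<noteq> 2" "(0::4) \<noteq> 3" "(1::4) \<noteq> 2" "(1::4) \<noteq> 3" "(2::4) \<noteq> 3"
  by simp_all

lemma eps_perm:
  assumes "p permutes (UNIV::4 set)"
  and "\<And>i. vector [axis a' 1, axis b' 1, axis c' 1, axis d' 1] $ i = (vector [axis a 1, axis b 1, axis c 1, axis d 1] :: real^4^4) $ p i"
  shows "eps a' b' c' d' = of_int (sign p) * eps a b c d"
  unfolding eps_def
  using det_permute_rows[OF assms(1), of "vector [axis a 1, axis b 1, axis c 1, axis d 1] :: real^4^4"]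
  by (metis (no_types, lifting) assms(2) vec_lambda_unique)

lemma eps_swap12: "eps b a c d = - eps a b c d"
proof -
  have "eps b a c d = of_int (sign (Transposition.transpose (1::4) 2)) * eps a b c d"
    apply (rule eps_perm)
     apply (simp add: permutes_swap_id)
    subgoal for i
    using exhaust_4[of i] by (auto simp: vector_4 four_eq0)
    done
  then show ?thesis by (simp add: sign_swap_id)
qed

lemma eps_swap23: "eps a c b d = - eps a b c d"
proof -
  have "eps a c b d = of_int (sign (Transposition.transpose (2::4) 3)) * eps a b c d"
    apply (rule eps_perm)
     apply (simp add: permutes_swap_id)
    subgoal for i
    using exhaust_4[of i] by (auto simp: vector_4 four_eq0)
    done
  then show ?thesis by (simp add: sign_swap_id)
qed

lemma eps_swap34: "eps a b d c = - eps a b c d"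
proof -
  have "eps a b d c = of_int (sign (Transposition.transpose (3::4) 0)) * eps a b c d"
    apply (rule eps_perm)
     apply (simp add: permutes_swap_id)
    subgoal for i
    using exhaust_4[of i] by (auto simp: vector_4 four_eq0)
    done
  then show ?thesis by (simp add: sign_swap_id)
qed

lemma eps_zero: "eps a a c d = 0"
  using eps_swap12[of a a c d] by simp

lemma epsv_0000: "eps 0 0 0 0 = 0" using eps_zero[of 0 0 0] by linarith
lemma epsv_0001: "eps 0 0 0 1 = 0" using eps_zero[of 0 0 1] by linarith
lemma epsv_0002: "eps 0 0 0 2 = 0" using eps_zero[of 0 0 2] by linarith
lemma epsv_0003: "eps 0 0 0 3 = 0" using eps_zero[of 0 0 3] by linarith
lemma epsv_0010: "eps 0 0 1 0 = 0" using eps_zero[of 0 1 0] by linarith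
lemma epsv_0011: "eps 0 0 1 1 = 0" using eps_zero[of 0 1 1] by linarith
lemma epsv_0012: "eps 0 0 1 2 = 0" using eps_zero[of 0 1 2] by linarith
lemma epsv_0013: "eps 0 0 1 3 = 0" using eps_zero[of 0 1 3] by linarith
lemma epsv_0020: "eps 0 0 2 0 = 0" using eps_zero[of 0 2 0] by linarith
lemma epsv_0021: "eps 0 0 2 1 = 0" using eps_zero[of 0 2 1] by linarith
lemma epsv_0022: "eps 0 0 2 2 = 0" using eps_zero[of 0 2 2] by linarith
lemma epsv_0023: "eps 0 0 2 3 = 0" using eps_zero[of 0 2 3] by linarith
lemma epsv_0030: "eps 0 0 3 0 = 0" using eps_zero[of 0 3 0] by linarith
lemma epsv_0031: "eps 0 0 3 1 = 0" using eps_zero[of 0 3 1] by linarith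
lemma epsv_0032: "eps 0 0 3 2 = 0" using eps_zero[of 0 3 2] by linarith
lemma epsv_0033: "eps 0 0 3 3 = 0" using eps_zero[of 0 3 3] by linarith
lemma epsv_0100: "eps 0 1 0 0 = 0" using eps_swap23[of 0 0 1 0] eps_zero[of 0 1 0] by linarith
lemma epsv_0101: "eps 0 1 0 1 = 0" using eps_swap23[of 0 0 1 1] eps_zero[of 0 1 1] by linarith
lemma epsv_0102: "eps 0 1 0 2 = 0" using eps_swap23[of 0 0 1 2] eps_zero[of 0 1 2] by linarith
lemma epsv_0103: "eps 0 1 0 3 = 0" using eps_swap23[of 0 0 1 3] eps_zero[of 0 1 3] by linarith
lemma epsv_0110: "eps 0 1 1 0 = 0" using eps_swap23[of 1 1 0 0] eps_swap12[of 1 0 1 0] eps_zero[of 1 0 0] by linarith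
lemma epsv_0111: "eps 0 1 1 1 = 0" using eps_swap23[of 1 1 0 1] eps_swap12[of 1 0 1 1] eps_zero[of 1 0 1] by linarith
lemma epsv_0112: "eps 0 1 1 2 = 0" using eps_swap23[of 1 1 0 2] eps_swap12[of 1 0 1 2] eps_zero[of 1 0 2] by linarith
lemma epsv_0113: "eps 0 1 1 3 = 0" using eps_swap23[of 1 1 0 3] eps_swap12[of 1 0 1 3] eps_zero[of 1 0 3] by linarith
lemma epsv_0120: "eps 0 1 2 0 = 0" using eps_swap23[of 0 0 1 2] eps_swap34[of 0 1 0 2] eps_zero[of 0 1 2] by linarith
lemma epsv_0121: "eps 0 1 2 1 = 0" using eps_swap23[of 1 1 0 2] eps_swap34[of 1 0 1 2] eps_swap12[of 1 0 2 1] eps_zero[of 1 0 2] by linarith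
lemma epsv_0122: "eps 0 1 2 2 = 0" using eps_swap23[of 2 2 0 1] eps_swap34[of 2 0 2 1] eps_swap12[of 2 0 1 2] eps_swap23[of 0 2 1 2] eps_zero[of 2 0 1] by linarith
lemma epsv_0130: "eps 0 1 3 0 = 0" using eps_swap23[of 0 0 1 3] eps_swap34[of 0 1 0 3] eps_zero[of 0 1 3] by linarith
lemma epsv_0131: "eps 0 1 3 1 = 0" using eps_swap23[of 1 1 0 3] eps_swap34[of 1 0 1 3] eps_swap12[of 1 0 3 1] eps_zero[of 1 0 3] by linarith
lemma epsv_0132: "eps 0 1 3 2 = - eps 0 1 2 3" using eps_swap34[of 0 1 2 3] by linarith
lemma epsv_0133: "eps 0 1 3 3 = 0" using eps_swap23[of 3 3 0 1] eps_swap34[of 3 0 3 1] eps_swap12[of 3 0 1 3] eps_swap23[of 0 3 1 3] eps_zero[of 3 0 1] by linarith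
lemma epsv_0200: "eps 0 2 0 0 = 0" using eps_swap23[of 0 0 2 0] eps_zero[of 0 2 0] by linarith
lemma epsv_0201: "eps 0 2 0 1 = 0" using eps_swap23[of 0 0 2 1] eps_zero[of 0 2 1] by linarith
lemma epsv_0202: "eps 0 2 0 2 = 0" using eps_swap23[of 0 0 2 2] eps_zero[of 0 2 2] by linarith
lemma epsv_0203: "eps 0 2 0 3 = 0" using eps_swap23[of 0 0 2 3] eps_zero[of 0 2 3] by linarith
lemma epsv_0210: "eps 0 2 1 0 = 0" using eps_swap23[of 0 0 2 1] eps_swap34[of 0 2 0 1] eps_zero[of 0 2 1] by linarith
lemma epsv_0211: "eps 0 2 1 1 = 0" using eps_swap23[of 1 1 0 2] eps_swap34[of 1 0 1 2] eps_swap12[of 1 0 2 1] eps_swap23[of 0 1 2 1] eps_zero[of 1 0 2] by linarith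
lemma epsv_0212: "eps 0 2 1 2 = 0" using eps_swap23[of 2 2 0 1] eps_swap34[of 2 0 2 1] eps_swap12[of 2 0 1 2] eps_zero[of 2 0 1] by linarith
lemma epsv_0213: "eps 0 2 1 3 = - eps 0 1 2 3" using eps_swap23[of 0 1 2 3] by linarith
lemma epsv_0220: "eps 0 2 2 0 = 0" using eps_swap23[of 2 2 0 0] eps_swap12[of 2 0 2 0] eps_zero[of 2 0 0] by linarith
lemma epsv_0221: "eps 0 2 2 1 = 0" using eps_swap23[of 2 2 0 1] eps_swap12[of 2 0 2 1] eps_zero[of 2 0 1] by linarith
lemma epsv_0222: "eps 0 2 2 2 = 0" using eps_swap23[of 2 2 0 2] eps_swap12[of 2 0 2 2] eps_zero[of 2 0 2] by linarith
lemma epsv_0223: "eps 0 2 2 3 = 0" using eps_swap23[of 2 2 0 3] eps_swap12[of 2 0 2 3] eps_zero[of 2 0 3] by linarith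
lemma epsv_0230: "eps 0 2 3 0 = 0" using eps_swap23[of 0 0 2 3] eps_swap34[of 0 2 0 3] eps_zero[of 0 2 3] by linarith
lemma epsv_0231: "eps 0 2 3 1 = eps 0 1 2 3" using eps_swap23[of 0 1 2 3] eps_swap34[of 0 2 1 3] by linarith
lemma epsv_0232: "eps 0 2 3 2 = 0" using eps_swap23[of 2 2 0 3] eps_swap34[of 2 0 2 3] eps_swap12[of 2 0 3 2] eps_zero[of 2 0 3] by linarith
lemma epsv_0233: "eps 0 2 3 3 = 0" using eps_swap23[of 3 3 0 2] eps_swap34[of 3 0 3 2] eps_swap12[of 3 0 2 3] eps_swap23[of 0 3 2 3] eps_zero[of 3 0 2] by linarith
lemma epsv_0300: "eps 0 3 0 0 = 0" using eps_swap23[of 0 0 3 0] eps_zero[of 0 3 0] by linarith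
lemma epsv_0301: "eps 0 3 0 1 = 0" using eps_swap23[of 0 0 3 1] eps_zero[of 0 3 1] by linarith
lemma epsv_0302: "eps 0 3 0 2 = 0" using eps_swap23[of 0 0 3 2] eps_zero[of 0 3 2] by linarith
lemma epsv_0303: "eps 0 3 0 3 = 0" using eps_swap23[of 0 0 3 3] eps_zero[of 0 3 3] by linarith
lemma epsv_0310: "eps 0 3 1 0 = 0" using eps_swap23[of 0 0 3 1] eps_swap34[of 0 3 0 1] eps_zero[of 0 3 1] by linarith
lemma epsv_0311: "eps 0 3 1 1 = 0" using eps_swap23[of 1 1 0 3] eps_swap34[of 1 0 1 3] eps_swap12[of 1 0 3 1] eps_swap23[of 0 1 3 1] eps_zero[of 1 0 3] by linarith
lemma epsv_0312: "eps 0 3 1 2 = eps 0 1 2 3" using eps_swap34[of 0 1 2 3] eps_swap23[of 0 1 3 2] by linarith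
lemma epsv_0313: "eps 0 3 1 3 = 0" using eps_swap23[of 3 3 0 1] eps_swap34[of 3 0 3 1] eps_swap12[of 3 0 1 3] eps_zero[of 3 0 1] by linarith
lemma epsv_0320: "eps 0 3 2 0 = 0" using eps_swap23[of 0 0 3 2] eps_swap34[of 0 3 0 2] eps_zero[of 0 3 2] by linarith
lemma epsv_0321: "eps 0 3 2 1 = - eps 0 1 2 3" using eps_swap23[of 0 1 2 3] eps_swap34[of 0 2 1 3] eps_swap23[of 0 2 3 1] by linarith
lemma epsv_0322: "eps 0 3 2 2 = 0" using eps_swap23[of 2 2 0 3] eps_swap34[of 2 0 2 3] eps_swap12[of 2 0 3 2] eps_swap23[of 0 2 3 2] eps_zero[of 2 0 3] by linarith
lemma epsv_0323: "eps 0 3 2 3 = 0" using eps_swap23[of 3 3 0 2] eps_swap34[of 3 0 3 2] eps_swap12[of 3 0 2 3] eps_zero[of 3 0 2] by linarith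
lemma epsv_0330: "eps 0 3 3 0 = 0" using eps_swap23[of 3 3 0 0] eps_swap12[of 3 0 3 0] eps_zero[of 3 0 0] by linarith
lemma epsv_0331: "eps 0 3 3 1 = 0" using eps_swap23[of 3 3 0 1] eps_swap12[of 3 0 3 1] eps_zero[of 3 0 1] by linarith
lemma epsv_0332: "eps 0 3 3 2 = 0" using eps_swap23[of 3 3 0 2] eps_swap12[of 3 0 3 2] eps_zero[of 3 0 2] by linarith
lemma epsv_0333: "eps 0 3 3 3 = 0" using eps_swap23[of 3 3 0 3] eps_swap12[of 3 0 3 3] eps_zero[of 3 0 3] by linarith
lemma epsv_1000: "eps 1 0 0 0 = 0" using eps_swap23[of 0 0 1 0] eps_swap12[of 0 1 0 0] eps_zero[of 0 1 0] by linarith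
lemma epsv_1001: "eps 1 0 0 1 = 0" using eps_swap23[of 0 0 1 1] eps_swap12[of 0 1 0 1] eps_zero[of 0 1 1] by linarith
lemma epsv_1002: "eps 1 0 0 2 = 0" using eps_swap23[of 0 0 1 2] eps_swap12[of 0 1 0 2] eps_zero[of 0 1 2] by linarith
lemma epsv_1003: "eps 1 0 0 3 = 0" using eps_swap23[of 0 0 1 3] eps_swap12[of 0 1 0 3] eps_zero[of 0 1 3] by linarith
lemma epsv_1010: "eps 1 0 1 0 = 0" using eps_swap23[of 1 1 0 0] eps_zero[of 1 0 0] by linarith
lemma epsv_1011: "eps 1 0 1 1 = 0" using eps_swap23[of 1 1 0 1] eps_zero[of 1 0 1] by linarith
lemma epsv_1012: "eps 1 0 1 2 = 0" using eps_swap23[of 1 1 0 2] eps_zero[of 1 0 2] by linarith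
lemma epsv_1013: "eps 1 0 1 3 = 0" using eps_swap23[of 1 1 0 3] eps_zero[of 1 0 3] by linarith
lemma epsv_1020: "eps 1 0 2 0 = 0" using eps_swap23[of 0 0 1 2] eps_swap34[of 0 1 0 2] eps_swap12[of 0 1 2 0] eps_zero[of 0 1 2] by linarith
lemma epsv_1021: "eps 1 0 2 1 = 0" using eps_swap23[of 1 1 0 2] eps_swap34[of 1 0 1 2] eps_zero[of 1 0 2] by linarith
lemma epsv_1022: "eps 1 0 2 2 = 0" using eps_swap23[of 2 2 1 0] eps_swap34[of 2 1 2 0] eps_swap12[of 2 1 0 2] eps_swap23[of 1 2 0 2] eps_zero[of 2 1 0] by linarith
lemma epsv_1023: "eps 1 0 2 3 = - eps 0 1 2 3" using eps_swap12[of 0 1 2 3] by linarith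
lemma epsv_1030: "eps 1 0 3 0 = 0" using eps_swap23[of 0 0 1 3] eps_swap34[of 0 1 0 3] eps_swap12[of 0 1 3 0] eps_zero[of 0 1 3] by linarith
lemma epsv_1031: "eps 1 0 3 1 = 0" using eps_swap23[of 1 1 0 3] eps_swap34[of 1 0 1 3] eps_zero[of 1 0 3] by linarith
lemma epsv_1032: "eps 1 0 3 2 = eps 0 1 2 3" using eps_swap34[of 0 1 2 3] eps_swap12[of 0 1 3 2] by linarith
lemma epsv_1033: "eps 1 0 3 3 = 0" using eps_swap23[of 3 3 1 0] eps_swap34[of 3 1 3 0] eps_swap12[of 3 1 0 3] eps_swap23[of 1 3 0 3] eps_zero[of 3 1 0] by linarith
lemma epsv_1100: "eps 1 1 0 0 = 0" using eps_zero[of 1 0 0] by linarith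
lemma epsv_1101: "eps 1 1 0 1 = 0" using eps_zero[of 1 0 1] by linarith
lemma epsv_1102: "eps 1 1 0 2 = 0" using eps_zero[of 1 0 2] by linarith
lemma epsv_1103: "eps 1 1 0 3 = 0" using eps_zero[of 1 0 3] by linarith
lemma epsv_1110: "eps 1 1 1 0 = 0" using eps_zero[of 1 1 0] by linarith
lemma epsv_1111: "eps 1 1 1 1 = 0" using eps_zero[of 1 1 1] by linarith
lemma epsv_1112: "eps 1 1 1 2 = 0" using eps_zero[of 1 1 2] by linarith
lemma epsv_1113: "eps 1 1 1 3 = 0" using eps_zero[of 1 1 3] by linarith
lemma epsv_1120: "eps 1 1 2 0 = 0" using eps_zero[of 1 2 0] by linarith
lemma epsv_1121: "eps 1 1 2 1 = 0" using eps_zero[of 1 2 1] by linarith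
lemma epsv_1122: "eps 1 1 2 2 = 0" using eps_zero[of 1 2 2] by linarith
lemma epsv_1123: "eps 1 1 2 3 = 0" using eps_zero[of 1 2 3] by linarith
lemma epsv_1130: "eps 1 1 3 0 = 0" using eps_zero[of 1 3 0] by linarith
lemma epsv_1131: "eps 1 1 3 1 = 0" using eps_zero[of 1 3 1] by linarith
lemma epsv_1132: "eps 1 1 3 2 = 0" using eps_zero[of 1 3 2] by linarith
lemma epsv_1133: "eps 1 1 3 3 = 0" using eps_zero[of 1 3 3] by linarith
lemma epsv_1200: "eps 1 2 0 0 = 0" using eps_swap23[of 0 0 1 2] eps_swap34[of 0 1 0 2] eps_swap12[of 0 1 2 0] eps_swap23[of 1 0 2 0] eps_zero[of 0 1 2] by linarith
lemma epsv_1201: "eps 1 2 0 1 = 0" using eps_swap23[of 1 1 2 0] eps_swap34[of 1 2 1 0] eps_zero[of 1 2 0] by linarith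
lemma epsv_1202: "eps 1 2 0 2 = 0" using eps_swap23[of 2 2 1 0] eps_swap34[of 2 1 2 0] eps_swap12[of 2 1 0 2] eps_zero[of 2 1 0] by linarith
lemma epsv_1203: "eps 1 2 0 3 = eps 0 1 2 3" using eps_swap12[of 0 1 2 3] eps_swap23[of 1 0 2 3] by linarith
lemma epsv_1210: "eps 1 2 1 0 = 0" using eps_swap23[of 1 1 2 0] eps_zero[of 1 2 0] by linarith
lemma epsv_1211: "eps 1 2 1 1 = 0" using eps_swap23[of 1 1 2 1] eps_zero[of 1 2 1] by linarith
lemma epsv_1212: "eps 1 2 1 2 = 0" using eps_swap23[of 1 1 2 2] eps_zero[of 1 2 2] by linarith
lemma epsv_1213: "eps 1 2 1 3 = 0" using eps_swap23[of 1 1 2 3] eps_zero[of 1 2 3] by linarith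
lemma epsv_1220: "eps 1 2 2 0 = 0" using eps_swap23[of 2 2 1 0] eps_swap12[of 2 1 2 0] eps_zero[of 2 1 0] by linarith
lemma epsv_1221: "eps 1 2 2 1 = 0" using eps_swap23[of 2 2 1 1] eps_swap12[of 2 1 2 1] eps_zero[of 2 1 1] by linarith
lemma epsv_1222: "eps 1 2 2 2 = 0" using eps_swap23[of 2 2 1 2] eps_swap12[of 2 1 2 2] eps_zero[of 2 1 2] by linarith
lemma epsv_1223: "eps 1 2 2 3 = 0" using eps_swap23[of 2 2 1 3] eps_swap12[of 2 1 2 3] eps_zero[of 2 1 3] by linarith
lemma epsv_1230: "eps 1 2 3 0 = - eps 0 1 2 3" using eps_swap12[of 0 1 2 3] eps_swap23[of 1 0 2 3] eps_swap34[of 1 2 0 3] by linarith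
lemma epsv_1231: "eps 1 2 3 1 = 0" using eps_swap23[of 1 1 2 3] eps_swap34[of 1 2 1 3] eps_zero[of 1 2 3] by linarith
lemma epsv_1232: "eps 1 2 3 2 = 0" using eps_swap23[of 2 2 1 3] eps_swap34[of 2 1 2 3] eps_swap12[of 2 1 3 2] eps_zero[of 2 1 3] by linarith
lemma epsv_1233: "eps 1 2 3 3 = 0" using eps_swap23[of 3 3 1 2] eps_swap34[of 3 1 3 2] eps_swap12[of 3 1 2 3] eps_swap23[of 1 3 2 3] eps_zero[of 3 1 2] by linarith
lemma epsv_1300: "eps 1 3 0 0 = 0" using eps_swap23[of 0 0 1 3] eps_swap34[of 0 1 0 3] eps_swap12[of 0 1 3 0] eps_swap23[of 1 0 3 0] eps_zero[of 0 1 3] by linarith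
lemma epsv_1301: "eps 1 3 0 1 = 0" using eps_swap23[of 1 1 3 0] eps_swap34[of 1 3 1 0] eps_zero[of 1 3 0] by linarith
lemma epsv_1302: "eps 1 3 0 2 = - eps 0 1 2 3" using eps_swap34[of 0 1 2 3] eps_swap12[of 0 1 3 2] eps_swap23[of 1 0 3 2] by linarith
lemma epsv_1303: "eps 1 3 0 3 = 0" using eps_swap23[of 3 3 1 0] eps_swap34[of 3 1 3 0] eps_swap12[of 3 1 0 3] eps_zero[of 3 1 0] by linarith
lemma epsv_1310: "eps 1 3 1 0 = 0" using eps_swap23[of 1 1 3 0] eps_zero[of 1 3 0] by linarith
lemma epsv_1311: "eps 1 3 1 1 = 0" using eps_swap23[of 1 1 3 1] eps_zero[of 1 3 1] by linarith
lemma epsv_1312: "eps 1 3 1 2 = 0" using eps_swap23[of 1 1 3 2] eps_zero[of 1 3 2] by linarith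
lemma epsv_1313: "eps 1 3 1 3 = 0" using eps_swap23[of 1 1 3 3] eps_zero[of 1 3 3] by linarith
lemma epsv_1320: "eps 1 3 2 0 = eps 0 1 2 3" using eps_swap12[of 0 1 2 3] eps_swap23[of 1 0 2 3] eps_swap34[of 1 2 0 3] eps_swap23[of 1 2 3 0] by linarith
lemma epsv_1321: "eps 1 3 2 1 = 0" using eps_swap23[of 1 1 3 2] eps_swap34[of 1 3 1 2] eps_zero[of 1 3 2] by linarith
lemma epsv_1322: "eps 1 3 2 2 = 0" using eps_swap23[of 2 2 1 3] eps_swap34[of 2 1 2 3] eps_swap12[of 2 1 3 2] eps_swap23[of 1 2 3 2] eps_zero[of 2 1 3] by linarith
lemma epsv_1323: "eps 1 3 2 3 = 0" using eps_swap23[of 3 3 1 2] eps_swap34[of 3 1 3 2] eps_swap12[of 3 1 2 3] eps_zero[of 3 1 2] by linarith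
lemma epsv_1330: "eps 1 3 3 0 = 0" using eps_swap23[of 3 3 1 0] eps_swap12[of 3 1 3 0] eps_zero[of 3 1 0] by linarith
lemma epsv_1331: "eps 1 3 3 1 = 0" using eps_swap23[of 3 3 1 1] eps_swap12[of 3 1 3 1] eps_zero[of 3 1 1] by linarith
lemma epsv_1332: "eps 1 3 3 2 = 0" using eps_swap23[of 3 3 1 2] eps_swap12[of 3 1 3 2] eps_zero[of 3 1 2] by linarith
lemma epsv_1333: "eps 1 3 3 3 = 0" using eps_swap23[of 3 3 1 3] eps_swap12[of 3 1 3 3] eps_zero[of 3 1 3] by linarith
lemma epsv_2000: "eps 2 0 0 0 = 0" using eps_swap23[of 0 0 2 0] eps_swap12[of 0 2 0 0] eps_zero[of 0 2 0] by linarith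
lemma epsv_2001: "eps 2 0 0 1 = 0" using eps_swap23[of 0 0 2 1] eps_swap12[of 0 2 0 1] eps_zero[of 0 2 1] by linarith
lemma epsv_2002: "eps 2 0 0 2 = 0" using eps_swap23[of 0 0 2 2] eps_swap12[of 0 2 0 2] eps_zero[of 0 2 2] by linarith
lemma epsv_2003: "eps 2 0 0 3 = 0" using eps_swap23[of 0 0 2 3] eps_swap12[of 0 2 0 3] eps_zero[of 0 2 3] by linarith
lemma epsv_2010: "eps 2 0 1 0 = 0" using eps_swap23[of 0 0 2 1] eps_swap34[of 0 2 0 1] eps_swap12[of 0 2 1 0] eps_zero[of 0 2 1] by linarith
lemma epsv_2011: "eps 2 0 1 1 = 0" using eps_swap23[of 1 1 2 0] eps_swap34[of 1 2 1 0] eps_swap12[of 1 2 0 1] eps_swap23[of 2 1 0 1] eps_zero[of 1 2 0] by linarith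
lemma epsv_2012: "eps 2 0 1 2 = 0" using eps_swap23[of 2 2 0 1] eps_swap34[of 2 0 2 1] eps_zero[of 2 0 1] by linarith
lemma epsv_2013: "eps 2 0 1 3 = eps 0 1 2 3" using eps_swap23[of 0 1 2 3] eps_swap12[of 0 2 1 3] by linarith
lemma epsv_2020: "eps 2 0 2 0 = 0" using eps_swap23[of 2 2 0 0] eps_zero[of 2 0 0] by linarith
lemma epsv_2021: "eps 2 0 2 1 = 0" using eps_swap23[of 2 2 0 1] eps_zero[of 2 0 1] by linarith
lemma epsv_2022: "eps 2 0 2 2 = 0" using eps_swap23[of 2 2 0 2] eps_zero[of 2 0 2] by linarith
lemma epsv_2023: "eps 2 0 2 3 = 0" using eps_swap23[of 2 2 0 3] eps_zero[of 2 0 3] by linarith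
lemma epsv_2030: "eps 2 0 3 0 = 0" using eps_swap23[of 0 0 2 3] eps_swap34[of 0 2 0 3] eps_swap12[of 0 2 3 0] eps_zero[of 0 2 3] by linarith
lemma epsv_2031: "eps 2 0 3 1 = - eps 0 1 2 3" using eps_swap23[of 0 1 2 3] eps_swap34[of 0 2 1 3] eps_swap12[of 0 2 3 1] by linarith
lemma epsv_2032: "eps 2 0 3 2 = 0" using eps_swap23[of 2 2 0 3] eps_swap34[of 2 0 2 3] eps_zero[of 2 0 3] by linarith
lemma epsv_2033: "eps 2 0 3 3 = 0" using eps_swap23[of 3 3 2 0] eps_swap34[of 3 2 3 0] eps_swap12[of 3 2 0 3] eps_swap23[of 2 3 0 3] eps_zero[of 3 2 0] by linarith
lemma epsv_2100: "eps 2 1 0 0 = 0" using eps_swap23[of 0 0 2 1] eps_swap34[of 0 2 0 1] eps_swap12[of 0 2 1 0] eps_swap23[of 2 0 1 0] eps_zero[of 0 2 1] by linarith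
lemma epsv_2101: "eps 2 1 0 1 = 0" using eps_swap23[of 1 1 2 0] eps_swap34[of 1 2 1 0] eps_swap12[of 1 2 0 1] eps_zero[of 1 2 0] by linarith
lemma epsv_2102: "eps 2 1 0 2 = 0" using eps_swap23[of 2 2 1 0] eps_swap34[of 2 1 2 0] eps_zero[of 2 1 0] by linarith
lemma epsv_2103: "eps 2 1 0 3 = - eps 0 1 2 3" using eps_swap12[of 0 1 2 3] eps_swap23[of 1 0 2 3] eps_swap12[of 1 2 0 3] by linarith
lemma epsv_2110: "eps 2 1 1 0 = 0" using eps_swap23[of 1 1 2 0] eps_swap12[of 1 2 1 0] eps_zero[of 1 2 0] by linarith
lemma epsv_2111: "eps 2 1 1 1 = 0" using eps_swap23[of 1 1 2 1] eps_swap12[of 1 2 1 1] eps_zero[of 1 2 1] by linarith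
lemma epsv_2112: "eps 2 1 1 2 = 0" using eps_swap23[of 1 1 2 2] eps_swap12[of 1 2 1 2] eps_zero[of 1 2 2] by linarith
lemma epsv_2113: "eps 2 1 1 3 = 0" using eps_swap23[of 1 1 2 3] eps_swap12[of 1 2 1 3] eps_zero[of 1 2 3] by linarith
lemma epsv_2120: "eps 2 1 2 0 = 0" using eps_swap23[of 2 2 1 0] eps_zero[of 2 1 0] by linarith
lemma epsv_2121: "eps 2 1 2 1 = 0" using eps_swap23[of 2 2 1 1] eps_zero[of 2 1 1] by linarith
lemma epsv_2122: "eps 2 1 2 2 = 0" using eps_swap23[of 2 2 1 2] eps_zero[of 2 1 2] by linarith
lemma epsv_2123: "eps 2 1 2 3 = 0" using eps_swap23[of 2 2 1 3] eps_zero[of 2 1 3] by linarith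
lemma epsv_2130: "eps 2 1 3 0 = eps 0 1 2 3" using eps_swap12[of 0 1 2 3] eps_swap23[of 1 0 2 3] eps_swap34[of 1 2 0 3] eps_swap12[of 1 2 3 0] by linarith
lemma epsv_2131: "eps 2 1 3 1 = 0" using eps_swap23[of 1 1 2 3] eps_swap34[of 1 2 1 3] eps_swap12[of 1 2 3 1] eps_zero[of 1 2 3] by linarith
lemma epsv_2132: "eps 2 1 3 2 = 0" using eps_swap23[of 2 2 1 3] eps_swap34[of 2 1 2 3] eps_zero[of 2 1 3] by linarith
lemma epsv_2133: "eps 2 1 3 3 = 0" using eps_swap23[of 3 3 2 1] eps_swap34[of 3 2 3 1] eps_swap12[of 3 2 1 3] eps_swap23[of 2 3 1 3] eps_zero[of 3 2 1] by linarith
lemma epsv_2200: "eps 2 2 0 0 = 0" using eps_zero[of 2 0 0] by linarith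
lemma epsv_2201: "eps 2 2 0 1 = 0" using eps_zero[of 2 0 1] by linarith
lemma epsv_2202: "eps 2 2 0 2 = 0" using eps_zero[of 2 0 2] by linarith
lemma epsv_2203: "eps 2 2 0 3 = 0" using eps_zero[of 2 0 3] by linarith
lemma epsv_2210: "eps 2 2 1 0 = 0" using eps_zero[of 2 1 0] by linarith
lemma epsv_2211: "eps 2 2 1 1 = 0" using eps_zero[of 2 1 1] by linarith
lemma epsv_2212: "eps 2 2 1 2 = 0" using eps_zero[of 2 1 2] by linarith
lemma epsv_2213: "eps 2 2 1 3 = 0" using eps_zero[of 2 1 3] by linarith
lemma epsv_2220: "eps 2 2 2 0 = 0" using eps_zero[of 2 2 0] by linarith
lemma epsv_2221: "eps 2 2 2 1 = 0" using eps_zero[of 2 2 1] by linarith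
lemma epsv_2222: "eps 2 2 2 2 = 0" using eps_zero[of 2 2 2] by linarith
lemma epsv_2223: "eps 2 2 2 3 = 0" using eps_zero[of 2 2 3] by linarith
lemma epsv_2230: "eps 2 2 3 0 = 0" using eps_zero[of 2 3 0] by linarith
lemma epsv_2231: "eps 2 2 3 1 = 0" using eps_zero[of 2 3 1] by linarith
lemma epsv_2232: "eps 2 2 3 2 = 0" using eps_zero[of 2 3 2] by linarith
lemma epsv_2233: "eps 2 2 3 3 = 0" using eps_zero[of 2 3 3] by linarith
lemma epsv_2300: "eps 2 3 0 0 = 0" using eps_swap23[of 0 0 2 3] eps_swap34[of 0 2 0 3] eps_swap12[of 0 2 3 0] eps_swap23[of 2 0 3 0] eps_zero[of 0 2 3] by linarith
lemma epsv_2301: "eps 2 3 0 1 = eps 0 1 2 3" using eps_swap23[of 0 1 2 3] eps_swap34[of 0 2 1 3] eps_swap12[of 0 2 3 1] eps_swap23[of 2 0 3 1] by linarith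
lemma epsv_2302: "eps 2 3 0 2 = 0" using eps_swap23[of 2 2 3 0] eps_swap34[of 2 3 2 0] eps_zero[of 2 3 0] by linarith
lemma epsv_2303: "eps 2 3 0 3 = 0" using eps_swap23[of 3 3 2 0] eps_swap34[of 3 2 3 0] eps_swap12[of 3 2 0 3] eps_zero[of 3 2 0] by linarith
lemma epsv_2310: "eps 2 3 1 0 = - eps 0 1 2 3" using eps_swap12[of 0 1 2 3] eps_swap23[of 1 0 2 3] eps_swap34[of 1 2 0 3] eps_swap12[of 1 2 3 0] eps_swap23[of 2 1 3 0] by linarith
lemma epsv_2311: "eps 2 3 1 1 = 0" using eps_swap23[of 1 1 2 3] eps_swap34[of 1 2 1 3] eps_swap12[of 1 2 3 1] eps_swap23[of 2 1 3 1] eps_zero[of 1 2 3] by linarith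
lemma epsv_2312: "eps 2 3 1 2 = 0" using eps_swap23[of 2 2 3 1] eps_swap34[of 2 3 2 1] eps_zero[of 2 3 1] by linarith
lemma epsv_2313: "eps 2 3 1 3 = 0" using eps_swap23[of 3 3 2 1] eps_swap34[of 3 2 3 1] eps_swap12[of 3 2 1 3] eps_zero[of 3 2 1] by linarith
lemma epsv_2320: "eps 2 3 2 0 = 0" using eps_swap23[of 2 2 3 0] eps_zero[of 2 3 0] by linarith
lemma epsv_2321: "eps 2 3 2 1 = 0" using eps_swap23[of 2 2 3 1] eps_zero[of 2 3 1] by linarith
lemma epsv_2322: "eps 2 3 2 2 = 0" using eps_swap23[of 2 2 3 2] eps_zero[of 2 3 2] by linarith
lemma epsv_2323: "eps 2 3 2 3 = 0" using eps_swap23[of 2 2 3 3] eps_zero[of 2 3 3] by linarith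
lemma epsv_2330: "eps 2 3 3 0 = 0" using eps_swap23[of 3 3 2 0] eps_swap12[of 3 2 3 0] eps_zero[of 3 2 0] by linarith
lemma epsv_2331: "eps 2 3 3 1 = 0" using eps_swap23[of 3 3 2 1] eps_swap12[of 3 2 3 1] eps_zero[of 3 2 1] by linarith
lemma epsv_2332: "eps 2 3 3 2 = 0" using eps_swap23[of 3 3 2 2] eps_swap12[of 3 2 3 2] eps_zero[of 3 2 2] by linarith
lemma epsv_2333: "eps 2 3 3 3 = 0" using eps_swap23[of 3 3 2 3] eps_swap12[of 3 2 3 3] eps_zero[of 3 2 3] by linarith
lemma epsv_3000: "eps 3 0 0 0 = 0" using eps_swap23[of 0 0 3 0] eps_swap12[of 0 3 0 0] eps_zero[of 0 3 0] by linarith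
lemma epsv_3001: "eps 3 0 0 1 = 0" using eps_swap23[of 0 0 3 1] eps_swap12[of 0 3 0 1] eps_zero[of 0 3 1] by linarith
lemma epsv_3002: "eps 3 0 0 2 = 0" using eps_swap23[of 0 0 3 2] eps_swap12[of 0 3 0 2] eps_zero[of 0 3 2] by linarith
lemma epsv_3003: "eps 3 0 0 3 = 0" using eps_swap23[of 0 0 3 3] eps_swap12[of 0 3 0 3] eps_zero[of 0 3 3] by linarith
lemma epsv_3010: "eps 3 0 1 0 = 0" using eps_swap23[of 0 0 3 1] eps_swap34[of 0 3 0 1] eps_swap12[of 0 3 1 0] eps_zero[of 0 3 1] by linarith
lemma epsv_3011: "eps 3 0 1 1 = 0" using eps_swap23[of 1 1 3 0] eps_swap34[of 1 3 1 0] eps_swap12[of 1 3 0 1] eps_swap23[of 3 1 0 1] eps_zero[of 1 3 0] by linarith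
lemma epsv_3012: "eps 3 0 1 2 = - eps 0 1 2 3" using eps_swap34[of 0 1 2 3] eps_swap23[of 0 1 3 2] eps_swap12[of 0 3 1 2] by linarith
lemma epsv_3013: "eps 3 0 1 3 = 0" using eps_swap23[of 3 3 0 1] eps_swap34[of 3 0 3 1] eps_zero[of 3 0 1] by linarith
lemma epsv_3020: "eps 3 0 2 0 = 0" using eps_swap23[of 0 0 3 2] eps_swap34[of 0 3 0 2] eps_swap12[of 0 3 2 0] eps_zero[of 0 3 2] by linarith
lemma epsv_3021: "eps 3 0 2 1 = eps 0 1 2 3" using eps_swap23[of 0 1 2 3] eps_swap34[of 0 2 1 3] eps_swap23[of 0 2 3 1] eps_swap12[of 0 3 2 1] by linarith
lemma epsv_3022: "eps 3 0 2 2 = 0" using eps_swap23[of 2 2 3 0] eps_swap34[of 2 3 2 0] eps_swap12[of 2 3 0 2] eps_swap23[of 3 2 0 2] eps_zero[of 2 3 0] by linarith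
lemma epsv_3023: "eps 3 0 2 3 = 0" using eps_swap23[of 3 3 0 2] eps_swap34[of 3 0 3 2] eps_zero[of 3 0 2] by linarith
lemma epsv_3030: "eps 3 0 3 0 = 0" using eps_swap23[of 3 3 0 0] eps_zero[of 3 0 0] by linarith
lemma epsv_3031: "eps 3 0 3 1 = 0" using eps_swap23[of 3 3 0 1] eps_zero[of 3 0 1] by linarith
lemma epsv_3032: "eps 3 0 3 2 = 0" using eps_swap23[of 3 3 0 2] eps_zero[of 3 0 2] by linarith
lemma epsv_3033: "eps 3 0 3 3 = 0" using eps_swap23[of 3 3 0 3] eps_zero[of 3 0 3] by linarith
lemma epsv_3100: "eps 3 1 0 0 = 0" using eps_swap23[of 0 0 3 1] eps_swap34[of 0 3 0 1] eps_swap12[of 0 3 1 0] eps_swap23[of 3 0 1 0] eps_zero[of 0 3 1] by linarith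
lemma epsv_3101: "eps 3 1 0 1 = 0" using eps_swap23[of 1 1 3 0] eps_swap34[of 1 3 1 0] eps_swap12[of 1 3 0 1] eps_zero[of 1 3 0] by linarith
lemma epsv_3102: "eps 3 1 0 2 = eps 0 1 2 3" using eps_swap34[of 0 1 2 3] eps_swap12[of 0 1 3 2] eps_swap23[of 1 0 3 2] eps_swap12[of 1 3 0 2] by linarith
lemma epsv_3103: "eps 3 1 0 3 = 0" using eps_swap23[of 3 3 1 0] eps_swap34[of 3 1 3 0] eps_zero[of 3 1 0] by linarith
lemma epsv_3110: "eps 3 1 1 0 = 0" using eps_swap23[of 1 1 3 0] eps_swap12[of 1 3 1 0] eps_zero[of 1 3 0] by linarith
lemma epsv_3111: "eps 3 1 1 1 = 0" using eps_swap23[of 1 1 3 1] eps_swap12[of 1 3 1 1] eps_zero[of 1 3 1] by linarith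
lemma epsv_3112: "eps 3 1 1 2 = 0" using eps_swap23[of 1 1 3 2] eps_swap12[of 1 3 1 2] eps_zero[of 1 3 2] by linarith
lemma epsv_3113: "eps 3 1 1 3 = 0" using eps_swap23[of 1 1 3 3] eps_swap12[of 1 3 1 3] eps_zero[of 1 3 3] by linarith
lemma epsv_3120: "eps 3 1 2 0 = - eps 0 1 2 3" using eps_swap12[of 0 1 2 3] eps_swap23[of 1 0 2 3] eps_swap34[of 1 2 0 3] eps_swap23[of 1 2 3 0] eps_swap12[of 1 3 2 0] by linarith
lemma epsv_3121: "eps 3 1 2 1 = 0" using eps_swap23[of 1 1 3 2] eps_swap34[of 1 3 1 2] eps_swap12[of 1 3 2 1] eps_zero[of 1 3 2] by linarith
lemma epsv_3122: "eps 3 1 2 2 = 0" using eps_swap23[of 2 2 3 1] eps_swap34[of 2 3 2 1] eps_swap12[of 2 3 1 2] eps_swap23[of 3 2 1 2] eps_zero[of 2 3 1] by linarith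
lemma epsv_3123: "eps 3 1 2 3 = 0" using eps_swap23[of 3 3 1 2] eps_swap34[of 3 1 3 2] eps_zero[of 3 1 2] by linarith
lemma epsv_3130: "eps 3 1 3 0 = 0" using eps_swap23[of 3 3 1 0] eps_zero[of 3 1 0] by linarith
lemma epsv_3131: "eps 3 1 3 1 = 0" using eps_swap23[of 3 3 1 1] eps_zero[of 3 1 1] by linarith
lemma epsv_3132: "eps 3 1 3 2 = 0" using eps_swap23[of 3 3 1 2] eps_zero[of 3 1 2] by linarith
lemma epsv_3133: "eps 3 1 3 3 = 0" using eps_swap23[of 3 3 1 3] eps_zero[of 3 1 3] by linarith
lemma epsv_3200: "eps 3 2 0 0 = 0" using eps_swap23[of 0 0 3 2] eps_swap34[of 0 3 0 2] eps_swap12[of 0 3 2 0] eps_swap23[of 3 0 2 0] eps_zero[of 0 3 2] by linarith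
lemma epsv_3201: "eps 3 2 0 1 = - eps 0 1 2 3" using eps_swap23[of 0 1 2 3] eps_swap34[of 0 2 1 3] eps_swap12[of 0 2 3 1] eps_swap23[of 2 0 3 1] eps_swap12[of 2 3 0 1] by linarith
lemma epsv_3202: "eps 3 2 0 2 = 0" using eps_swap23[of 2 2 3 0] eps_swap34[of 2 3 2 0] eps_swap12[of 2 3 0 2] eps_zero[of 2 3 0] by linarith
lemma epsv_3203: "eps 3 2 0 3 = 0" using eps_swap23[of 3 3 2 0] eps_swap34[of 3 2 3 0] eps_zero[of 3 2 0] by linarith
lemma epsv_3210: "eps 3 2 1 0 = eps 0 1 2 3" using eps_swap12[of 0 1 2 3] eps_swap23[of 1 0 2 3] eps_swap34[of 1 2 0 3] eps_swap12[of 1 2 3 0] eps_swap23[of 2 1 3 0] eps_swap12[of 2 3 1 0] by linarith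
lemma epsv_3211: "eps 3 2 1 1 = 0" using eps_swap23[of 1 1 3 2] eps_swap34[of 1 3 1 2] eps_swap12[of 1 3 2 1] eps_swap23[of 3 1 2 1] eps_zero[of 1 3 2] by linarith
lemma epsv_3212: "eps 3 2 1 2 = 0" using eps_swap23[of 2 2 3 1] eps_swap34[of 2 3 2 1] eps_swap12[of 2 3 1 2] eps_zero[of 2 3 1] by linarith
lemma epsv_3213: "eps 3 2 1 3 = 0" using eps_swap23[of 3 3 2 1] eps_swap34[of 3 2 3 1] eps_zero[of 3 2 1] by linarith
lemma epsv_3220: "eps 3 2 2 0 = 0" using eps_swap23[of 2 2 3 0] eps_swap12[of 2 3 2 0] eps_zero[of 2 3 0] by linarith
lemma epsv_3221: "eps 3 2 2 1 = 0" using eps_swap23[of 2 2 3 1] eps_swap12[of 2 3 2 1] eps_zero[of 2 3 1] by linarith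
lemma epsv_3222: "eps 3 2 2 2 = 0" using eps_swap23[of 2 2 3 2] eps_swap12[of 2 3 2 2] eps_zero[of 2 3 2] by linarith
lemma epsv_3223: "eps 3 2 2 3 = 0" using eps_swap23[of 2 2 3 3] eps_swap12[of 2 3 2 3] eps_zero[of 2 3 3] by linarith
lemma epsv_3230: "eps 3 2 3 0 = 0" using eps_swap23[of 3 3 2 0] eps_zero[of 3 2 0] by linarith
lemma epsv_3231: "eps 3 2 3 1 = 0" using eps_swap23[of 3 3 2 1] eps_zero[of 3 2 1] by linarith
lemma epsv_3232: "eps 3 2 3 2 = 0" using eps_swap23[of 3 3 2 2] eps_zero[of 3 2 2] by linarith
lemma epsv_3233: "eps 3 2 3 3 = 0" using eps_swap23[of 3 3 2 3] eps_zero[of 3 2 3] by linarith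
lemma epsv_3300: "eps 3 3 0 0 = 0" using eps_zero[of 3 0 0] by linarith
lemma epsv_3301: "eps 3 3 0 1 = 0" using eps_zero[of 3 0 1] by linarith
lemma epsv_3302: "eps 3 3 0 2 = 0" using eps_zero[of 3 0 2] by linarith
lemma epsv_3303: "eps 3 3 0 3 = 0" using eps_zero[of 3 0 3] by linarith
lemma epsv_3310: "eps 3 3 1 0 = 0" using eps_zero[of 3 1 0] by linarith
lemma epsv_3311: "eps 3 3 1 1 = 0" using eps_zero[of 3 1 1] by linarith
lemma epsv_3312: "eps 3 3 1 2 = 0" using eps_zero[of 3 1 2] by linarith
lemma epsv_3313: "eps 3 3 1 3 = 0" using eps_zero[of 3 1 3] by linarith
lemma epsv_3320: "eps 3 3 2 0 = 0" using eps_zero[of 3 2 0] by linarith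
lemma epsv_3321: "eps 3 3 2 1 = 0" using eps_zero[of 3 2 1] by linarith
lemma epsv_3322: "eps 3 3 2 2 = 0" using eps_zero[of 3 2 2] by linarith
lemma epsv_3323: "eps 3 3 2 3 = 0" using eps_zero[of 3 2 3] by linarith
lemma epsv_3330: "eps 3 3 3 0 = 0" using eps_zero[of 3 3 0] by linarith
lemma epsv_3331: "eps 3 3 3 1 = 0" using eps_zero[of 3 3 1] by linarith
lemma epsv_3332: "eps 3 3 3 2 = 0" using eps_zero[of 3 3 2] by linarith
lemma epsv_3333: "eps 3 3 3 3 = 0" using eps_zero[of 3 3 3] by linarith
lemmas eps_table = epsv_0000 epsv_0001 epsv_0002 epsv_0003 epsv_0010 epsv_0011 epsv_0012 epsv_0013 epsv_0020 epsv_0021 epsv_0022 epsv_0023 epsv_0030 epsv_0031 epsv_0032 epsv_0033 epsv_0100 epsv_0101 epsv_0102 epsv_0103 epsv_0110 epsv_0111 epsv_0112 epsv_0113 epsv_0120 epsv_0121 epsv_0122 epsv_0130 epsv_0131 epsv_0132 epsv_0133 epsv_0200 epsv_0201 epsv_0202 epsv_0203 epsv_0210 epsv_0211 epsv_0212 epsv_0213 epsv_0220 epsv_0221 epsv_0222 epsv_0223 epsv_0230 epsv_0231 epsv_0232 epsv_0233 epsv_0300 epsv_0301 epsv_0302 epsv_0303 epsv_0310 epsv_0311 epsv_0312 epsv_0313 epsv_0320 epsv_0321 epsv_0322 epsv_0323 epsv_0330 epsv_0331 epsv_0332 epsv_0333 epsv_1000 epsv_1001 epsv_1002 epsv_1003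 epsv_1010 epsv_1011 epsv_1012 epsv_1013 epsv_1020 epsv_1021 epsv_1022 epsv_1023 epsv_1030 epsv_1031 epsv_1032 epsv_1033 epsv_1100 epsv_1101 epsv_1102 epsv_1103 epsv_1110 epsv_1111 epsv_1112 epsv_1113 epsv_1120 epsv_1121 epsv_1122 epsv_1123 epsv_1130 epsv_1131 epsv_1132 epsv_1133 epsv_1200 epsv_1201 epsv_1202 epsv_1203 epsv_1210 epsv_1211 epsv_1212 epsv_1213 epsv_1220 epsv_1221 epsv_1222 epsv_1223 epsv_1230 epsv_1231 epsv_1232 epsv_1233 epsv_1300 epsv_1301 epsv_1302 epsv_1303 epsv_1310 epsv_1311 epsv_1312 epsv_1313 epsv_1320 epsv_1321 epsv_1322 epsv_1323 epsv_1330 epsv_1331 epsv_1332 epsv_1333 epsv_2000 epsv_2001 epsv_2002 epsv_2003 epsv_2010 epsv_2011 epsv_2012 epsv_2013 epsv_2020 epsv_2021 epsv_2022 epsv_2023 epsv_2030 epsv_2031 epsv_2032 epsv_2033 epsv_2100 epsv_2101 epsv_2102 epsv_2103 epsv_2110 epsv_2111 epsv_2112 epsv_2113 epsv_2120 epsv_2121 epsv_2122 epsv_2123 epsv_2130 epsv_2131 epsv_2132 epsv_2133 epsv_2200 epsv_2201 epsv_2202 epsv_2203 epsv_2210 epsv_2211 epsv_2212 epsv_2213 epsv_2220 epsv_2221 epsv_2222 epsv_2223 epsv_2230 epsv_2231 epsv_2232 epsv_2233 epsv_2300 epsv_2301 epsv_2302 epsv_2303 epsv_2310 epsv_2311 epsv_2312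 epsv_2313 epsv_2320 epsv_2321 epsv_2322 epsv_2323 epsv_2330 epsv_2331 epsv_2332 epsv_2333 epsv_3000 epsv_3001 epsv_3002 epsv_3003 epsv_3010 epsv_3011 epsv_3012 epsv_3013 epsv_3020 epsv_3021 epsv_3022 epsv_3023 epsv_3030 epsv_3031 epsv_3032 epsv_3033 epsv_3100 epsv_3101 epsv_3102 epsv_3103 epsv_3110 epsv_3111 epsv_3112 epsv_3113 epsv_3120 epsv_3121 epsv_3122 epsv_3123 epsv_3130 epsv_3131 epsv_3132 epsv_3133 epsv_3200 epsv_3201 epsv_3202 epsv_3203 epsv_3210 epsv_3211 epsv_3212 epsv_3213 epsv_3220 epsv_3221 epsv_3222 epsv_3223 epsv_3230 epsv_3231 epsv_3232 epsv_3233 epsv_3300 epsv_3301 epsv_3302 epsv_3303 epsv_3310 epsv_3311 epsv_3312 epsv_3313 epsv_3320 epsv_3321 epsv_3322 epsv_3323 epsv_3330 epsv_3331 epsv_3332 epsv_3333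



lemma eta_vals: "eta 0 = -1" "eta 1 = 1" "eta 2 = 1" "eta 3 = 1"
  by (simp_all add: eta_def)
lemma eta_sq: "eta i * eta i = 1" by (simp add: eta_def)
lemma eta_sq': "eta i * (eta i * x) = x" by (simp add: eta_def)

lemma lower_raise_mult: "lower x $ i * raise y $ i = x $ i * y $ i"
  by (simp add: lower_def raise_def eta_def)

lemma lower_nth: "lower x $ i = eta i * x $ i"
  by (simp add: lower_def)

lemma spin_vec_eq:
  assumes m: "mass c p * c = m" and k: "mdot u p = k" and m0: "m \<noteq> 0" and mk: "m - k \<noteq> 0"
    and pW: "(\<Sum>\<nu>\<in>UNIV. p$\<nu> * PL_low p Jl $\<nu>) = 0"
  shows "lower (spin_vec c p Jl u) $ \<mu> = (PL_low p Jl $ \<mu> + (lower p $ \<mu> + m * lower u $ \<mu>)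
     * (\<Sum>\<nu>\<in>UNIV. u$\<nu> * PL_low p Jl $ \<nu>) / (m - k)) / m"
proof -
  define W where "W = PL_low p Jl"
  define a where "a = (p$\<mu>/m + u$\<mu>) / ((m-k)/m)"
  define b where "b = 2*u$\<mu>/m"
  have e: "1 - k / m = (m - k) / m" using m0 by (simp add: field_simps)
  have B: "Bmat c p u $ \<mu> $ \<nu> = (if \<mu> = \<nu> then 1 else 0) + a * (lower p $ \<nu> / m + lower u $ \<nu>) - b * lower p $ \<nu>" for \<nu>
    unfolding Bmat_def Let_def m k e a_def b_def by simp
  have dl: "(\<Sum>\<nu>\<in>UNIV. f \<nu> * (if \<mu> = \<nu> then 1 else 0)) = (f \<mu>::real)" for f
  proof -
    have "(\<Sum>\<nu>\<in>UNIV. f \<nu> * (if \<mu> = \<nu> then 1 else 0)) = (\<Sum>\<nu>\<in>UNIV. if \<mu> = \<nu> then f \<nu> else 0)"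
      by (rule sum.cong) auto
    then show ?thesis by simp
  qed
  have S: "(\<Sum>\<nu>\<in>UNIV. Bmat c p u $ \<mu> $ \<nu> * raise W $ \<nu>) =
      raise W $ \<mu> + a * ((\<Sum>\<nu>\<in>UNIV. lower p $ \<nu> * raise W $ \<nu>) / m + (\<Sum>\<nu>\<in>UNIV. lower u $ \<nu> * raise W $ \<nu>))
      - b * (\<Sum>\<nu>\<in>UNIV. lower p $ \<nu> * raise W $ \<nu>)"
  proof -
    have "(\<Sum>\<nu>\<in>UNIV. Bmat c p u $ \<mu> $ \<nu> * raise W $ \<nu>) =
       (\<Sum>\<nu>\<in>UNIV. raise W $ \<nu> * (if \<mu> = \<nu> then 1 else 0) + ((a/m) * (lower p $ \<nu> * raise W $ \<nu>)
          + a * (lower u $ \<nu> * raise W $ \<nu>)) - b * (lower p $ \<nu> * raise W $ \<nu>))"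
      by (rule sum.cong) (simp_all only: B, simp_all add: algebra_simps)
    also have "\<dots> = raise W $ \<mu> + ((a/m) * (\<Sum>\<nu>\<in>UNIV. lower p $ \<nu> * raise W $ \<nu>)
       + a * (\<Sum>\<nu>\<in>UNIV. lower u $ \<nu> * raise W $ \<nu>)) - b * (\<Sum>\<nu>\<in>UNIV. lower p $ \<nu> * raise W $ \<nu>)"
      by (simp only: sum_subtractf sum.distrib sum_distrib_left[symmetric] dl)
    finally show ?thesis by (simp add: algebra_simps)
  qed
  have s1: "(\<Sum>\<nu>\<in>UNIV. lower p $ \<nu> * raise W $ \<nu>) = 0"
    using pW unfolding W_def[symmetric] lower_raise_mult .
  have s2: "(\<Sum>\<nu>\<in>UNIV. lower u $ \<nu> * raise W $ \<nu>) = (\<Sum>\<nu>\<in>UNIV. u$\<nu> * W $\<nu>)"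
    unfolding lower_raise_mult ..
  show ?thesis
    unfolding spin_vec_def W_def[symmetric] m
    apply (simp only: lower_nth vec_lambda_beta)
    apply (simp only: S s1 s2)
    using m0 mk eta_sq[of \<mu>] unfolding a_def raise_def
    apply (simp add: field_simps eta_sq')
    done
qed

lemma antisymD: assumes "antisym_tensor T"
  shows "T$0$0 = 0" "T$1$1 = 0" "T$2$2 = 0" "T$3$3 = 0"
   "T$1$0 = - T$0$1" "T$2$0 = - T$0$2" "T$3$0 = - T$0$3"
   "T$2$1 = - T$1$2" "T$3$1 = - T$1$3" "T$3$2 = - T$2$3"
  using assms unfolding antisym_tensor_def by (metis neg_equal_zero)+

lemma PL_comps:
  assumes "antisym_tensor Jl"
  shows "PL_low p Jl $ 0 = eps 0 1 2 3 * (- p$1 * Jl$2$3 + p$2 * Jl$1$3 - p$3 * Jl$1$2)"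
    "PL_low p Jl $ 1 = eps 0 1 2 3 * (p$0 * Jl$2$3 + p$2 * Jl$0$3 - p$3 * Jl$0$2)"
    "PL_low p Jl $ 2 = eps 0 1 2 3 * (- p$0 * Jl$1$3 - p$1 * Jl$0$3 + p$3 * Jl$0$1)"
    "PL_low p Jl $ 3 = eps 0 1 2 3 * (p$0 * Jl$1$2 + p$1 * Jl$0$2 - p$2 * Jl$0$1)"
  unfolding PL_low_def
  by (simp_all add: sum4 eps_table raise2_def eta_vals antisymD[OF assms] algebra_simps)

lemma pW_zero:
  assumes "antisym_tensor Jl"
  shows "(\<Sum>\<nu>\<in>UNIV. p$\<nu> * PL_low p Jl $\<nu>) = 0"
  unfolding sum4 PL_comps[OF assms] by (simp add: algebra_simps)

definition Avec :: "real \<Rightarrow> real \<Rightarrow> real^4^4 \<Rightarrow> real^4 \<Rightarrow> real^4 \<Rightarrow> real^4" where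
  "Avec m k Jl p u = (\<chi> \<rho>. (\<Sum>l\<in>UNIV. Jl$\<rho>$l * (u$l + p$l/m)) / (m - k))"

lemma lower_raise: "lower (raise x) = x"
  by (simp add: lower_def raise_def vec_eq_iff eta_sq')

lemma spin_tensor_eq:
  assumes m: "mass c (P g) * c = m" and k: "mdot u (P g) = k"
  shows "spin_tensor P J (chiNW c P J) u \<tau> g = (\<chi> \<rho> \<sigma>. J g$\<rho>$\<sigma> + Avec m k (J g) (P g) u $\<rho> * lower (P g) $\<sigma>
     - Avec m k (J g) (P g) u $\<sigma> * lower (P g) $\<rho>)"
  unfolding spin_tensor_def chiNW_def lower_raise chiNW_low_def Let_def m k Avec_def
  by (simp add: vec_eq_iff algebra_simps)

lemma spin_id:
  fixes p u :: "real^4" and Jl :: "real^4^4"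
  assumes as: "antisym_tensor Jl" and m0: "m > 0" and mk: "m - k > 0"
    and kd: "k = -(u$0*p$0) + u$1*p$1 + u$2*p$2 + u$3*p$3"
    and mm: "m*m = p$0*p$0 - p$1*p$1 - p$2*p$2 - p$3*p$3"
    and uu: "-(u$0*u$0) + u$1*u$1 + u$2*u$2 + u$3*u$3 = -1"
  shows "(PL_low p Jl $ \<mu> + (lower p $ \<mu> + m * lower u $ \<mu>) * (\<Sum>\<nu>\<in>UNIV. u$\<nu> * PL_low p Jl $\<nu>) / (m - k)) / m
    = - (1/2) * (\<Sum>\<nu>\<in>UNIV. \<Sum>\<rho>\<in>UNIV. \<Sum>\<sigma>\<in>UNIV. eps \<mu> \<nu> \<rho> \<sigma> * u$\<nu> *
        raise2 (\<chi> \<rho> \<sigma>. Jl$\<rho>$\<sigma> + Avec m k Jl p u $\<rho> * lower p $\<sigma> - Avec m k Jl p u $\<sigma> * lower p $\<rho>) $\<rho>$\<sigma>)"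
proof -
  define t where "t = inverse (m*(m-k))"
  have tm: "t * (m*(m-k)) = 1" unfolding t_def using m0 mk by (simp add: field_simps)
  have Ai: "Avec m k Jl p u $ i = (\<Sum>l\<in>UNIV. Jl$i$l * (m*u$l + p$l)) * t" for i
    unfolding Avec_def t_def using m0 mk by (simp add: sum_divide_distrib sum_distrib_right field_simps)
  have Lf: "(PL_low p Jl $ \<mu> + (lower p $ \<mu> + m * lower u $ \<mu>) * (\<Sum>\<nu>\<in>UNIV. u$\<nu> * PL_low p Jl $\<nu>) / (m - k)) / m
      = t * ((m-k) * PL_low p Jl $ \<mu> + (lower p $ \<mu> + m * lower u $ \<mu>) * (\<Sum>\<nu>\<in>UNIV. u$\<nu> * PL_low p Jl $\<nu>))"
    unfolding t_def using m0 mk by (simp add: field_simps)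
  have c0: ?thesis if h: "\<mu> = 0"
    unfolding Lf Ai
    apply (simp add: h sum4 eps_table raise2_def eta_vals lower_nth antisymD[OF as] PL_comps[OF as])
    using tm kd mm uu by algebra
  have c1: ?thesis if h: "\<mu> = 1"
    unfolding Lf Ai
    apply (simp add: h sum4 eps_table raise2_def eta_vals lower_nth antisymD[OF as] PL_comps[OF as])
    using tm kd mm uu by algebra
  have c2: ?thesis if h: "\<mu> = 2"
    unfolding Lf Ai
    apply (simp add: h sum4 eps_table raise2_def eta_vals lower_nth antisymD[OF as] PL_comps[OF as])
    using tm kd mm uu by algebra
  have c3: ?thesis if h: "\<mu> = 3"
    unfolding Lf Ai
    apply (simp add: h sum4 eps_table raise2_def eta_vals lower_nth antisymD[OF as] PL_comps[OF as])
    using tm kd mm uu by algebra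
  show ?thesis using exhaust_4[of \<mu>] four_eq0 c0 c1 c2 c3 by auto
qed

lemma mdot_neg:
  assumes u: "future_unit u" and p: "future_timelike p"
  shows "mdot u p < 0"
proof -
  have uu: "-(u$0*u$0) + u$1*u$1 + u$2*u$2 + u$3*u$3 = -1" and u0: "u$0 > 0"
    using u unfolding future_unit_def mdot_def sum4 eta_vals by auto
  have pp: "-(p$0*p$0) + p$1*p$1 + p$2*p$2 + p$3*p$3 < 0" and p0: "p$0 > 0"
    using p unfolding future_timelike_def mdot_def sum4 eta_vals by auto
  define su where "su = u$1*u$1 + u$2*u$2 + u$3*u$3"
  define sv where "sv = p$1*p$1 + p$2*p$2 + p$3*p$3"
  define d where "d = u$1*p$1 + u$2*p$2 + u$3*p$3"
  have "su * sv - d*d = (u$1*p$2-u$2*p$1)^2 + (u$1*p$3-u$3*p$1)^2 + (u$2*p$3-u$3*p$2)^2"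
    unfolding su_def sv_def d_def by algebra
  then have cs: "d*d \<le> su * sv" by (smt (verit) zero_le_power2)
  have su0: "su \<ge> 0" "sv \<ge> 0" unfolding su_def sv_def by auto
  have "su * sv \<le> su*(p$0*p$0)" using su0 pp unfolding sv_def by (intro mult_left_mono) auto
  also have "\<dots> < (u$0*u$0)*(p$0*p$0)" using uu p0 unfolding su_def by (intro mult_strict_right_mono) auto
  finally have "d*d < (u$0*p$0)*(u$0*p$0)" using cs by (simp add: algebra_simps)
  then have "d < u$0*p$0" using u0 p0
    by (smt (verit, best) mult_mono mult_pos_pos)
  then show ?thesis unfolding mdot_def sum4 eta_vals d_def by simp
qed

lemma mass_facts:
  assumes c: "c > 0" and p: "future_timelike p"
  shows "mass c p * c > 0" "(mass c p * c) * (mass c p * c) = - mdot p p"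
proof -
  have "mdot p p < 0" using p unfolding future_timelike_def by auto
  then have e: "mass c p * c = sqrt (- mdot p p)" unfolding mass_def using c by simp
  show "mass c p * c > 0" unfolding e using \<open>mdot p p < 0\<close> by simp
  show "(mass c p * c) * (mass c p * c) = - mdot p p" unfolding e using \<open>mdot p p < 0\<close> by simp
qed


lemma mdot_raise: "mdot u (raise x) = (\<Sum>i\<in>UNIV. u$i * x$i)"
  unfolding mdot_def raise_def by (rule sum.cong) (auto simp: eta_def)

theorem mainTheorem3:
  fixes c :: real and P :: "'g \<Rightarrow> real^4" and J :: "'g \<Rightarrow> real^4^4"
  assumes "c > 0"
    and "\<And>g. antisym_tensor (J g)"
    and "\<And>g. future_timelike (P g)"
  shows "centre_of_spin c P J (chiNW c P J)"
proof -
  note c0 = assms(1) and as = assms(2) and ft = assms(3)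
  have basic: "mass c (P g) * c > 0 \<and> mdot u (P g) < 0
     \<and> mass c (P g) * c * (mass c (P g) * c) = P g $ 0 * P g $ 0 - P g $ 1 * P g $ 1 - P g $ 2 * P g $ 2 - P g $ 3 * P g $ 3
     \<and> mdot u (P g) = -(u$0 * P g $0) + u$1 * P g $1 + u$2 * P g $2 + u$3 * P g $3
     \<and> -(u$0*u$0) + u$1*u$1 + u$2*u$2 + u$3*u$3 = -1"
    if fu: "future_unit u" for u g
  proof (intro conjI)
    show "mass c (P g) * c > 0" using mass_facts[OF c0 ft] by simp
    show "mdot u (P g) < 0" using mdot_neg[OF fu ft] .
    show "mass c (P g) * c * (mass c (P g) * c) = P g $ 0 * P g $ 0 - P g $ 1 * P g $ 1 - P g $ 2 * P g $ 2 - P g $ 3 * P g $ 3"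
      using mass_facts(2)[OF c0 ft[of g]] unfolding mdot_def sum4 eta_vals by simp
    show "mdot u (P g) = -(u$0 * P g $0) + u$1 * P g $1 + u$2 * P g $2 + u$3 * P g $3"
      unfolding mdot_def sum4 eta_vals by simp
    show "-(u$0*u$0) + u$1*u$1 + u$2*u$2 + u$3*u$3 = -1"
      using fu unfolding future_unit_def mdot_def sum4 eta_vals by simp
  qed
  have pos: "position_observable P (chiNW c P J)"
    unfolding position_observable_def
  proof (intro allI impI conjI)
    fix u \<tau> g assume fu: "future_unit u"
    define m where "m = mass c (P g) * c"
    define k where "k = mdot u (P g)"
    have mc: "mass c (P g) * c = m" and kk: "mdot u (P g) = k" unfolding m_def k_def by simp_all
    have m0: "m > 0" and k0: "k < 0" and kd: "k = -(u$0 * P g $0) + u$1 * P g $1 + u$2 * P g $2 + u$3 * P g $3"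
      using basic[OF fu, of g] unfolding mc kk by auto
    have i1a: "inverse m * m = 1" using m0 by simp
    have i1b: "inverse (m - k) * (m - k) = 1" using m0 k0 by simp
    have i1c: "inverse k * k = 1" using k0 by (simp add: less_imp_neq)
    note i1 = i1a i1b i1c
    show "mdot u (chiNW c P J u \<tau> g) = - \<tau>"
      unfolding chiNW_def mdot_raise chiNW_low_def Let_def mc kk
      apply (simp add: sum4 lower_nth eta_vals antisymD[OF as[of g]] divide_inverse inverse_mult_distrib)
      using kd i1 by algebra
    have eq: "(\<lambda>t. lower (chiNW c P J u t g)) = (\<lambda>t. chiNW_low c P J u 0 g + t *\<^sub>R ((1 / (- k)) *\<^sub>R lower (P g)))"
      unfolding chiNW_def lower_raise chiNW_low_def Let_def mc kk
      by (rule ext) (simp add: vec_eq_iff algebra_simps)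
    show "((\<lambda>t. lower (chiNW c P J u t g)) has_vector_derivative
            ((1 / (- mdot u (P g))) *\<^sub>R lower (P g))) (at \<tau>)"
      unfolding eq kk
      using k0 by (auto intro!: derivative_eq_intros)
  qed
  have spin: "\<forall>u \<tau> g. future_unit u \<longrightarrow>
        (\<forall>\<mu>. lower (spin_vec c (P g) (J g) u) $ \<mu> =
              - (1/2) * (\<Sum>\<nu>\<in>UNIV. \<Sum>\<rho>\<in>UNIV. \<Sum>\<sigma>\<in>UNIV.
                  eps \<mu> \<nu> \<rho> \<sigma> * u $ \<nu> * raise2 (spin_tensor P J (chiNW c P J) u \<tau> g) $ \<rho> $ \<sigma>))"
  proof (intro allI impI)
    fix u \<tau> g \<mu> assume fu: "future_unit u"
    define m where "m = mass c (P g) * c"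
    define k where "k = mdot u (P g)"
    have mc: "mass c (P g) * c = m" and kk: "mdot u (P g) = k" unfolding m_def k_def by simp_all
    have m0: "m > 0" and k0: "k < 0" and kd: "k = -(u$0 * P g $0) + u$1 * P g $1 + u$2 * P g $2 + u$3 * P g $3"
      and mm: "m * m = P g $ 0 * P g $ 0 - P g $ 1 * P g $ 1 - P g $ 2 * P g $ 2 - P g $ 3 * P g $ 3"
      and uu: "-(u$0*u$0) + u$1*u$1 + u$2*u$2 + u$3*u$3 = -1"
      using basic[OF fu, of g] unfolding mc kk by auto
    have mk: "m - k > 0" using m0 k0 by simp
    have L: "lower (spin_vec c (P g) (J g) u) $ \<mu> = (PL_low (P g) (J g) $ \<mu> + (lower (P g) $ \<mu> + m * lower u $ \<mu>)
     * (\<Sum>\<nu>\<in>UNIV. u$\<nu> * PL_low (P g) (J g) $ \<nu>) / (m - k)) / m"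
      by (rule spin_vec_eq[OF mc kk]) (use m0 mk pW_zero[OF as] in auto)
    show "lower (spin_vec c (P g) (J g) u) $ \<mu> =
              - (1/2) * (\<Sum>\<nu>\<in>UNIV. \<Sum>\<rho>\<in>UNIV. \<Sum>\<sigma>\<in>UNIV.
                  eps \<mu> \<nu> \<rho> \<sigma> * u $ \<nu> * raise2 (spin_tensor P J (chiNW c P J) u \<tau> g) $ \<rho> $ \<sigma>)"
      unfolding L spin_tensor_eq[where P=P and g=g and J=J and \<tau>=\<tau>, OF mc kk]
      by (rule spin_id[OF as m0 mk kd mm uu])
  qed
  show ?thesis unfolding centre_of_spin_def using pos spin by blast
qed

end
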